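(* Let $p$ be a prime and let $G$ be a nontrivial finite abelian $p$-group. Then $n_G=\exp(G)$ if and only if $G$ is either cyclic or elementary abelian.
   Context: For a finite group $G$ and $x\in G$, let $I_{\mathcal C}(x)=\{y\in G : \langle x,y\rangle \text{ is cyclic}\}$. For a nontrivial finite group $G$, $n_G=\max\{|I_{\mathcal C}(x)| : x\in G\setminus\{1\}\}$. $\exp(G)$ denotes the exponent of $G$. *)

theory Defs
  imports "HOL-Algebra.Algebra"
begin

definition cyclic_partners :: "('a, 'b) monoid_scheme \<Rightarrow> 'a \<Rightarrow> 'a set" where
  "cyclic_partners G x = {y \<in> carrier G. cyclic_group (subgroup_generated G {x, y})}"

definition n_cyc :: "('a, 'b) monoid_scheme \<Rightarrow> nat" where
  "n_cyc G = Max ((\<lambda>x. card (cyclic_partners G x)) ` (carrier G - {\<one>\<^bsub>G\<^esub>}))"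

definition group_exponent :: "('a, 'b) monoid_scheme \<Rightarrow> nat" where
  "group_exponent G = (LEAST n::nat. 0 < n \<and> (\<forall>g \<in> carrier G. g [^]\<^bsub>G\<^esub> n = \<one>\<^bsub>G\<^esub>))"

definition elementary_abelian :: "nat \<Rightarrow> ('a, 'b) monoid_scheme \<Rightarrow> bool" where
  "elementary_abelian p G \<longleftrightarrow> comm_group G \<and> (\<forall>g \<in> carrier G. g [^]\<^bsub>G\<^esub> p = \<one>\<^bsub>G\<^esub>)"

end

theory Submission
  imports Defs "HOL-Computational_Algebra.Primes"
begin

lemma (in group) gen_eq_cyclic:
  assumes "x \<in> carrier G" "y \<in> carrier G" "z \<in> carrier G"
    "x \<in> generate G {z}" "y \<in> generate G {z}" "z \<in> generate G {x,y}"
  shows "cyclic_group (subgroup_generated G {x,y})"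
proof -
  have "generate G {x,y} \<subseteq> generate G {z}"
    using assms by (intro generate_subgroup_incl) (auto intro: generate_is_subgroup)
  moreover have "generate G {z} \<subseteq> generate G {x,y}"
    using assms by (intro generate_subgroup_incl) (auto intro: generate_is_subgroup)
  ultimately have "subgroup_generated G {x,y} = subgroup_generated G {z}"
    using assms unfolding subgroup_generated_def
    by (metis Int_absorb1 empty_subsetI insert_subset subset_antisym)
  then show ?thesis using cyclic_group_generated by simp
qed

lemma (in group) sub_cyclic:
  assumes g: "g \<in> carrier G" and x: "x \<in> generate G {g}" and y: "y \<in> generate G {g}"
  shows "cyclic_group (subgroup_generated G {x,y})"
proof -
  obtain a :: int where a: "x = g [^] a" using x generate_pow[OF g] by blast
  obtain b :: int where b: "y = g [^] b" using y generate_pow[OF g] by blast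
  obtain u v :: int where uv: "u * a + v * b = gcd a b" using bezout_int by blast
  define z where "z = g [^] gcd a b"
  have xc: "x \<in> carrier G" and yc: "y \<in> carrier G" using a b g by auto
  have zc: "z \<in> carrier G" using g z_def by simp
  have "z = x [^] u \<otimes> y [^] v"
    using g by (simp add: z_def a b int_pow_pow int_pow_mult[symmetric] uv[symmetric] mult.commute)
  moreover have "x [^] u \<in> generate G {x,y}" "y [^] v \<in> generate G {x,y}"
    using xc yc subgroup_int_pow_closed[OF generate_is_subgroup[of "{x,y}"] generate.incl[of _ "{x,y}"]]
    by auto
  ultimately have zg: "z \<in> generate G {x,y}"
    using subgroup.m_closed[OF generate_is_subgroup] xc yc by auto
  have "x = z [^] (a div gcd a b)"
    using g by (simp add: z_def a int_pow_pow)
  then have xz: "x \<in> generate G {z}" using generate_pow[OF zc] by blast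
  have "y = z [^] (b div gcd a b)"
    using g by (simp add: z_def b int_pow_pow)
  then have yz: "y \<in> generate G {z}" using generate_pow[OF zc] by blast
  show ?thesis using gen_eq_cyclic[OF xc yc zc xz yz zg] .
qed

lemma (in group) expo_ord:
  assumes fin: "finite (carrier G)" and c: "c \<in> carrier G"
    and all: "\<And>g. g \<in> carrier G \<Longrightarrow> g [^] ord c = \<one>"
  shows "group_exponent G = ord c"
  unfolding group_exponent_def
proof (rule Least_equality)
  show "0 < ord c \<and> (\<forall>g\<in>carrier G. g [^] ord c = \<one>)"
    using ord_ge_1[OF fin c] all by auto
next
  fix n :: nat assume "0 < n \<and> (\<forall>g\<in>carrier G. g [^] n = \<one>)"
  then show "ord c \<le> n" using c pow_eq_id[OF c] by (auto intro: dvd_imp_le)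
qed

lemma (in group) n_cyc_const:
  assumes "carrier G \<noteq> {\<one>}"
    and "\<And>x. x \<in> carrier G \<Longrightarrow> x \<noteq> \<one> \<Longrightarrow> card (cyclic_partners G x) = N"
  shows "n_cyc G = N"
proof -
  have "(\<lambda>x. card (cyclic_partners G x)) ` (carrier G - {\<one>}) = {N}"
    using assms by auto
  then show ?thesis unfolding n_cyc_def by simp
qed

lemma (in group) cyclic_case:
  assumes fin: "finite (carrier G)" and cyc: "cyclic_group G" and nt: "carrier G \<noteq> {\<one>}"
  shows "n_cyc G = group_exponent G"
proof -
  obtain g where g: "g \<in> carrier G" "subgroup_generated G {g} = G"
    using cyc unfolding cyclic_group_def by blast
  have gen: "generate G {g} = carrier G"
    using g by (metis carrier_subgroup_generated Int_absorb1 empty_subsetI insert_subset)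
  have og: "ord g = order G" using generate_pow_card[OF g(1)] gen by (simp add: order_def)
  have "group_exponent G = order G"
    using expo_ord[OF fin g(1)] og pow_order_eq_1 by simp
  moreover have "n_cyc G = order G"
  proof (rule n_cyc_const[OF nt])
    fix x assume x: "x \<in> carrier G"
    have "cyclic_partners G x = carrier G"
      unfolding cyclic_partners_def using sub_cyclic[OF g(1)] gen x by auto
    then show "card (cyclic_partners G x) = order G" by (simp add: order_def)
  qed
  ultimately show ?thesis by simp
qed

lemma (in group) elem_case:
  assumes fin: "finite (carrier G)" and pr: "Factorial_Ring.prime (p::nat)"
    and el: "\<And>g. g \<in> carrier G \<Longrightarrow> g [^] p = \<one>" and nt: "carrier G \<noteq> {\<one>}"
  shows "n_cyc G = group_exponent G"
proof -
  have ordp: "ord x = p" if x: "x \<in> carrier G" "x \<noteq> \<one>" for x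
  proof -
    have "ord x dvd p" using pow_eq_id[OF x(1)] el[OF x(1)] by simp
    moreover have "ord x \<noteq> 1" using ord_eq_1[OF x(1)] x(2) by simp
    ultimately show ?thesis using pr unfolding prime_nat_iff by auto
  qed
  obtain x0 where x0: "x0 \<in> carrier G" "x0 \<noteq> \<one>" using nt by blast
  have "group_exponent G = p"
    using expo_ord[OF fin x0(1)] ordp[OF x0] el by simp
  moreover have "n_cyc G = p"
  proof (rule n_cyc_const[OF nt])
    fix x assume x: "x \<in> carrier G" "x \<noteq> \<one>"
    have "cyclic_partners G x = generate G {x}"
    proof
      show "generate G {x} \<subseteq> cyclic_partners G x"
        unfolding cyclic_partners_def
        using sub_cyclic[OF x(1) generate.incl[of x "{x}"]] x(1)
          generate_incl[of "{x}"] by auto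
    next
      show "cyclic_partners G x \<subseteq> generate G {x}"
      proof
        fix y assume "y \<in> cyclic_partners G x"
        then have y: "y \<in> carrier G" and cy: "cyclic_group (subgroup_generated G {x,y})"
          unfolding cyclic_partners_def by auto
        let ?H = "subgroup_generated G {x,y}"
        have gH: "group ?H" by (rule group_subgroup_generated)
        obtain h where h: "h \<in> carrier ?H" "carrier ?H = range (\<lambda>n::int. h [^]\<^bsub>?H\<^esub> n)"
          using group.cyclic_group[OF gH] cy by blast
        have hc: "h \<in> carrier G" using h(1) carrier_subgroup_generated_subset by blast
        have cH: "carrier ?H = generate G {h}"
          using h int_pow_subgroup_generated[OF h(1)] generate_pow[OF hc] by auto
        have xyH: "x \<in> carrier ?H" "y \<in> carrier ?H"
          using x(1) y by (auto simp: carrier_subgroup_generated intro: generate.incl)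
        have sub: "generate G {x} \<subseteq> generate G {h}"
          using xyH cH by (intro generate_subgroup_incl) (auto intro: generate_is_subgroup hc)
        have "ord h dvd p" using pow_eq_id[OF hc] el[OF hc] by simp
        then have "ord h \<le> p" using pr by (simp add: dvd_imp_le prime_gt_0_nat)
        moreover have "finite (generate G {h})"
          using fin generate_incl[of "{h}"] hc finite_subset by blast
        ultimately have "generate G {x} = generate G {h}"
          using sub card_mono[OF _ sub] generate_pow_card[OF hc] generate_pow_card[OF x(1)] ordp[OF x]
          by (intro card_subset_eq) auto
        then show "y \<in> generate G {x}" using xyH cH by simp
      qed
    qed
    then show "card (cyclic_partners G x) = p"
      using generate_pow_card[OF x(1)] ordp[OF x] by simp
  qed
  ultimately show ?thesis by simp
qed

lemma (in comm_group) hard_case: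
  assumes fin: "finite (carrier G)" and pr: "Factorial_Ring.prime (p::nat)"
    and pg: "order G = p ^ k" and ncyc: "\<not> cyclic_group G"
    and nel: "g0 \<in> carrier G" "g0 [^] p \<noteq> \<one>"
  shows "n_cyc G \<noteq> group_exponent G"
proof -
  have p1: "1 < p" using pr prime_gt_1_nat by blast
  have ordp: "\<exists>i. ord g = p ^ i" if "g \<in> carrier G" for g
  proof -
    have "ord g dvd p ^ k" using ord_dvd_group_order[OF that] pg by simp
    then show ?thesis using pr by (auto simp: divides_primepow_nat)
  qed
  define e where "e = Max (ord ` carrier G)"
  have "e \<in> ord ` carrier G" unfolding e_def using fin one_closed by (intro Max_in) auto
  then obtain c where c: "c \<in> carrier G" "ord c = e" by auto
  have le: "ord g \<le> e" if "g \<in> carrier G" for g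
    unfolding e_def using fin that by (intro Max_ge) auto
  obtain m where m: "e = p ^ m" using ordp[OF c(1)] c(2) by auto
  have dv: "ord g dvd e" if g: "g \<in> carrier G" for g
  proof -
    obtain i where i: "ord g = p ^ i" using ordp[OF g] by auto
    have "p ^ i \<le> p ^ m" using le[OF g] i m by simp
    then have "i \<le> m" by (rule power_le_imp_le_exp[OF p1])
    then show ?thesis using i m by (simp add: le_imp_power_dvd)
  qed
  have expo: "group_exponent G = e"
  proof -
    have "g [^] ord c = \<one>" if "g \<in> carrier G" for g
      using pow_eq_id[OF that] dv[OF that] c(2) by simp
    then show ?thesis using expo_ord[OF fin c(1)] c(2) by simp
  qed
  have m2: "2 \<le> m"
  proof (rule ccontr)
    assume "\<not> 2 \<le> m"
    then have "e dvd p" using m by (cases m) (auto simp: le_Suc_eq)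
    then have "ord g0 dvd p" using dv[OF nel(1)] dvd_trans by blast
    then show False using nel pow_eq_id by auto
  qed
  have gc: "generate G {c} \<noteq> carrier G"
  proof
    assume "generate G {c} = carrier G"
    then have "subgroup_generated G {c} = G"
      using c(1) unfolding subgroup_generated_def by simp
    then show False using ncyc c(1) unfolding cyclic_group_def by blast
  qed
  have gsub: "generate G {c} \<subseteq> carrier G" using c(1) generate_incl[of "{c}"] by auto
  then obtain g where g: "g \<in> carrier G" "g \<notin> generate G {c}" using gc by blast
  let ?C = "generate G {c}"
  have Csg: "subgroup ?C G" using c(1) generate_is_subgroup[of "{c}"] by auto
  define P where "P = (\<lambda>i. g [^] (p ^ i) \<in> ?C)"
  have "g [^] (p ^ m) = \<one>" using dv[OF g(1)] m pow_eq_id[OF g(1)] by simp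
  then have Pm: "P m" unfolding P_def using subgroup.one_closed[OF Csg] by simp
  define i0 where "i0 = (LEAST i. P i)"
  have Pi0: "P i0" unfolding i0_def using Pm by (rule LeastI)
  have i0: "i0 \<noteq> 0"
  proof
    assume "i0 = 0" then show False using Pi0 g unfolding P_def by simp
  qed
  have nPi: "\<not> P (i0 - 1)" unfolding i0_def using i0 not_less_Least[of "i0 - 1" P] i0_def by auto
  define g1 where "g1 = g [^] (p ^ (i0 - 1))"
  have g1c: "g1 \<in> carrier G" using g1_def g by simp
  have g1n: "g1 \<notin> ?C" using nPi unfolding P_def g1_def .
  have "g1 [^] p = g [^] (p ^ i0)"
  proof -
    have "p ^ (i0 - 1) * p = p ^ i0" using i0 by (metis Suc_diff_1 neq0_conv power_Suc2)
    then show ?thesis using g by (simp add: g1_def nat_pow_pow)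
  qed
  then have "g1 [^] p \<in> ?C" using Pi0 unfolding P_def by simp
  then obtain kk :: int where kk: "g1 [^] p = c [^] kk" using generate_pow[OF c(1)] by auto
  have "c [^] (kk * int (p ^ (m - 1))) = (g1 [^] p) [^] (p ^ (m - 1))"
    unfolding int_pow_pow[symmetric, OF c(1)] kk[symmetric] by (rule int_pow_int)
  also have "\<dots> = g1 [^] (p ^ m)"
  proof -
    have "p * p ^ (m - 1) = p ^ m" using m2 by (metis Suc_diff_1 not_numeral_le_zero neq0_conv power_Suc)
    then show ?thesis using g1c by (simp add: nat_pow_pow)
  qed
  also have "\<dots> = \<one>" using dv[OF g1c] m pow_eq_id[OF g1c] by simp
  finally have "int (ord c) dvd kk * int (p ^ (m - 1))" using int_pow_eq_id[OF c(1)] by simp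
  then have "int p * int (p ^ (m - 1)) dvd kk * int (p ^ (m - 1))"
    using c(2) m m2 by (metis Suc_diff_1 gr0I not_numeral_le_zero of_nat_mult power_Suc)
  then have "int p dvd kk" using p1 by simp
  then obtain k' where k': "kk = int p * k'" by blast
  define z where "z = g1 \<otimes> inv (c [^] k')"
  have zc: "z \<in> carrier G" using z_def g1c c(1) by simp
  have ckc: "c [^] k' \<in> ?C" using generate_pow[OF c(1)] by blast
  have zn: "z \<notin> ?C"
  proof
    assume "z \<in> ?C"
    then have "z \<otimes> c [^] k' \<in> ?C" using ckc subgroup.m_closed[OF Csg] by blast
    moreover have "z \<otimes> c [^] k' = g1" using g1c c(1) by (simp add: z_def m_assoc)
    ultimately show False using g1n by simp
  qed
  have ck: "(c [^] k') [^] p = c [^] kk"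
    unfolding int_pow_int[symmetric] int_pow_pow[OF c(1)] k' by (simp add: mult.commute)
  have "z [^] p = g1 [^] p \<otimes> inv (c [^] k') [^] p"
    unfolding z_def using g1c c(1) by (simp add: pow_mult_distrib m_comm)
  also have "\<dots> = c [^] kk \<otimes> inv (c [^] kk)"
    using c(1) by (simp add: kk nat_pow_inv ck)
  also have "\<dots> = \<one>" using c(1) by simp
  finally have zp: "z [^] p = \<one>" .
  define x where "x = c [^] (p ^ (m - 1))"
  have xc: "x \<in> carrier G" using x_def c(1) by simp
  have xn: "x \<noteq> \<one>"
  proof
    assume "x = \<one>"
    then have "p ^ m dvd p ^ (m - 1)" using pow_eq_id[OF c(1)] c(2) m x_def by simp
    then have "p ^ m \<le> p ^ (m - 1)" using p1 by (simp add: dvd_imp_le)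
    then have "m \<le> m - 1" using p1 power_le_imp_le_exp by blast
    then show False using m2 by simp
  qed
  define y where "y = c \<otimes> z"
  have yc: "y \<in> carrier G" using y_def c(1) zc by simp
  have "z [^] (p ^ (m - 1)) = \<one>"
  proof -
    have "p dvd p ^ (m - 1)" using m2 by (simp add: dvd_power)
    then have "ord z dvd p ^ (m - 1)" using pow_eq_id[OF zc] zp dvd_trans by blast
    then show ?thesis using pow_eq_id[OF zc] by simp
  qed
  then have yx: "y [^] (p ^ (m - 1)) = x"
    unfolding y_def x_def using c(1) zc by (simp add: pow_mult_distrib m_comm)
  have "x \<in> generate G {y}"
  proof -
    have "x = y [^] (int (p ^ (m - 1)))" unfolding int_pow_int using yx by simp
    then show ?thesis using generate_pow[OF yc] by blast
  qed
  moreover have "y \<in> generate G {y}" by (rule generate.incl) simp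
  moreover have "y \<in> generate G {x, y}" by (rule generate.incl) simp
  ultimately have ycp: "y \<in> cyclic_partners G x"
    unfolding cyclic_partners_def using gen_eq_cyclic[OF xc yc yc] yc by blast
  have xC: "x \<in> ?C"
  proof -
    have "x = c [^] (int (p ^ (m - 1)))" unfolding int_pow_int using x_def by simp
    then show ?thesis using generate_pow[OF c(1)] by blast
  qed
  have Ccp: "?C \<subseteq> cyclic_partners G x"
    unfolding cyclic_partners_def using sub_cyclic[OF c(1) xC] gsub by auto
  have ynC: "y \<notin> ?C"
  proof
    assume "y \<in> ?C"
    then have "inv c \<otimes> y \<in> ?C"
      using subgroup.m_closed[OF Csg] subgroup.m_inv_closed[OF Csg] generate.incl[of c "{c}"] by blast
    moreover have "inv c \<otimes> y = z" using c(1) zc by (simp add: y_def m_assoc[symmetric])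
    ultimately show False using zn by simp
  qed
  have fcp: "finite (cyclic_partners G x)"
    using fin unfolding cyclic_partners_def by simp
  have "card (insert y ?C) \<le> card (cyclic_partners G x)"
    using Ccp ycp fcp by (intro card_mono) auto
  moreover have "card (insert y ?C) = e + 1"
    using ynC generate_pow_card[OF c(1)] c(2) finite_subset[OF gsub fin] by simp
  moreover have "card (cyclic_partners G x) \<le> n_cyc G"
    unfolding n_cyc_def using xc xn fin by (intro Max_ge) auto
  ultimately show ?thesis using expo by simp
qed

theorem proposition2p5:
  fixes G :: "('a, 'b) monoid_scheme" and p :: nat
  assumes "Factorial_Ring.prime p"
    and "comm_group G"
    and "finite (carrier G)"
    and "\<exists>k. order G = p ^ k"
    and "carrier G \<noteq> {\<one>\<^bsub>G\<^esub>}"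
  shows "n_cyc G = group_exponent G \<longleftrightarrow> cyclic_group G \<or> elementary_abelian p G"
proof -
  interpret comm_group G by (rule assms(2))
  obtain k where k: "order G = p ^ k" using assms(4) by blast
  show ?thesis
  proof
    assume eq: "n_cyc G = group_exponent G"
    show "cyclic_group G \<or> elementary_abelian p G"
    proof (rule ccontr)
      assume "\<not> (cyclic_group G \<or> elementary_abelian p G)"
      then have nc: "\<not> cyclic_group G" and "\<not> elementary_abelian p G" by auto
      then obtain g0 where "g0 \<in> carrier G" "g0 [^]\<^bsub>G\<^esub> p \<noteq> \<one>\<^bsub>G\<^esub>"
        unfolding elementary_abelian_def using assms(2) by auto
      then show False using hard_case[OF assms(3) assms(1) k nc] eq by blast
    qed
  next
    assume "cyclic_group G \<or> elementary_abelian p G"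
    then show "n_cyc G = group_exponent G"
    proof
      assume "cyclic_group G"
      then show ?thesis using cyclic_case assms(3,5) by blast
    next
      assume "elementary_abelian p G"
      then show ?thesis using elem_case[OF assms(3) assms(1)] assms(5)
        unfolding elementary_abelian_def by blast
    qed
  qed
qed

end
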